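(* Let $ABC$ be a triangle with incenter $I$ and orthocenter $H$, and let $H_A, H_B, H_C$ be the orthocenters of the triangles $BIC$, $CIA$, $AIB$ respectively. Let $O_A, O_B, O_C$ be the circumcenters of the triangles $AH_BH_C$, $BH_CH_A$, $CH_AH_B$ respectively. Then $H$ is the orthocenter of triangle $O_AO_BO_C$, and $I$ is the Euler reflection point of triangle $O_AO_BO_C$.
   Context: The Euler reflection point of a (non-equilateral) triangle is the common point of the reflections of its Euler line in the three sidelines of the triangle. *)

theory Defs
  imports "HOL-Analysis.Analysis"
begin

definition triangle :: "complex \<Rightarrow> complex \<Rightarrow> complex \<Rightarrow> bool" where
  "triangle A B C \<longleftrightarrow> \<not> collinear {A, B, C}"

definition equilateral :: "complex \<Rightarrow> complex \<Rightarrow> complex \<Rightarrow> bool" where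
  "equilateral A B C \<longleftrightarrow> dist A B = dist B C \<and> dist B C = dist C A"

definition incenter :: "complex \<Rightarrow> complex \<Rightarrow> complex \<Rightarrow> complex" where
  "incenter A B C =
     (dist B C *\<^sub>R A + dist C A *\<^sub>R B + dist A B *\<^sub>R C) /\<^sub>R (dist B C + dist C A + dist A B)"

definition orthocenter :: "complex \<Rightarrow> complex \<Rightarrow> complex \<Rightarrow> complex" where
  "orthocenter A B C =
     (THE H. inner (H - A) (B - C) = 0 \<and> inner (H - B) (C - A) = 0 \<and> inner (H - C) (A - B) = 0)"

definition circumcenter :: "complex \<Rightarrow> complex \<Rightarrow> complex \<Rightarrow> complex" where
  "circumcenter A B C = (THE X. dist X A = dist X B \<and> dist X B = dist X C)"

definition centroid :: "complex \<Rightarrow> complex \<Rightarrow> complex \<Rightarrow> complex" where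
  "centroid A B C = (A + B + C) / 3"

definition line :: "complex \<Rightarrow> complex \<Rightarrow> complex set" where
  "line P Q = {P + t *\<^sub>R (Q - P) | t. True}"

text \<open>Euler line of a (non-equilateral) triangle: the line through circumcenter and centroid.\<close>
definition euler_line :: "complex \<Rightarrow> complex \<Rightarrow> complex \<Rightarrow> complex set" where
  "euler_line A B C = line (circumcenter A B C) (centroid A B C)"

definition reflect :: "complex \<Rightarrow> complex \<Rightarrow> complex \<Rightarrow> complex" where
  "reflect P Q X = P + (Q - P) * cnj ((X - P) / (Q - P))"

definition euler_reflection_point :: "complex \<Rightarrow> complex \<Rightarrow> complex \<Rightarrow> complex \<Rightarrow> bool" where
  "euler_reflection_point E A B C \<longleftrightarrow>
     triangle A B C \<and> \<not> equilateral A B C \<and>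
     E \<in> reflect B C ` euler_line A B C \<and>
     E \<in> reflect C A ` euler_line A B C \<and>
     E \<in> reflect A B ` euler_line A B C"

end

theory Submission
  imports Defs
begin

lemma cnj_unit: "cmod x = 1 \<Longrightarrow> cnj x = 1/x"
proof -
  assume h: "cmod x = 1"
  hence "x * cnj x = 1" using complex_norm_square[of x] by simp
  moreover have "x \<noteq> 0" using h by auto
  ultimately show ?thesis by (simp add: field_simps)
qed

lemma cnj_real_eq: "Im w = 0 \<Longrightarrow> cnj w = w"
  by (simp add: complex_eq_iff)

lemma cnj_fix_Im: "cnj w = w \<Longrightarrow> Im w = 0"
proof -
  assume h: "cnj w = w"
  have a: "Im (cnj w) = Im w" using h by simp
  have b: "Im (cnj w) = - Im w" by simp
  from a b show ?thesis by linarith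
qed

lemma cnj_fix_ofreal: "cnj w = w \<Longrightarrow> w = of_real (Re w)"
proof -
  assume h: "cnj w = w"
  have "Im w = 0" using cnj_fix_Im h .
  then show ?thesis by (simp add: complex_eq_iff)
qed

lemma inner_cnj: "inner a b = Re (cnj a * b)"
  by (simp add: inner_complex_def)

lemma inner_zeroI: "cnj a * b + a * cnj b = 0 \<Longrightarrow> inner a b = 0"
proof -
  assume h: "cnj a * b + a * cnj b = 0"
  have "Re (cnj a * b + a * cnj b) = 2 * Re (cnj a * b)" by simp
  with h show ?thesis by (simp add: inner_cnj)
qed

lemma lin_zero:
  assumes "inner d u = 0" "inner d v = 0" "Im (cnj u * v) \<noteq> 0"
  shows "d = 0"
proof -
  have e1: "Re d * Re u + Im d * Im u = 0" "Re d * Re v + Im d * Im v = 0"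
    using assms(1,2) by (auto simp: inner_complex_def)
  have k: "Re u * Im v - Im u * Re v \<noteq> 0" using assms(3) by simp
  have "Re d * (Re u * Im v - Im u * Re v) = 0"
    using e1 by algebra
  hence "Re d = 0" using k by simp
  moreover have "Im d * (Re u * Im v - Im u * Re v) = 0"
    using e1 by algebra
  hence "Im d = 0" using k by simp
  ultimately show ?thesis by (simp add: complex_eq_iff)
qed

lemma cancel_uc: "(u::complex) \<noteq> 0 \<Longrightarrow> cnj u * v * u / (u * cnj u) = v"
  by (simp add: field_simps)

lemma noncol_iff: "\<not> collinear {A, B, C} \<longleftrightarrow> Im (cnj (B - A) * (C - A)) \<noteq> 0"
proof -
  have c: "collinear {A,B,C} \<longleftrightarrow> collinear {0, B - A, C - A}"
  proof -
    have "collinear {A,B,C} = collinear {B,A,C}" by (simp add: insert_commute)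
    also have "\<dots> = collinear {0, B - A, C - A}"
      using collinear_3[of B A C] by (simp add: NO_MATCH_def)
    finally show ?thesis .
  qed
  have "collinear {0, B - A, C - A} \<longleftrightarrow> Im (cnj (B - A) * (C - A)) = 0"
  proof
    assume "collinear {0, B - A, C - A}"
    then have "B - A = 0 \<or> C - A = 0 \<or> (\<exists>c. C - A = c *\<^sub>R (B - A))"
      using collinear_lemma[of "B - A" "C - A"] by blast
    then show "Im (cnj (B - A) * (C - A)) = 0"
    proof (elim disjE exE)
      assume "B - A = 0" then show ?thesis by simp
    next
      assume "C - A = 0" then show ?thesis by simp
    next
      fix c assume hc: "C - A = c *\<^sub>R (B - A)"
      have "cnj (B - A) * (C - A) = of_real c * ((B - A) * cnj (B - A))"
        unfolding hc scaleR_conv_of_real by (simp only: mult.commute mult.left_commute)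
      also have "\<dots> = of_real (c * (cmod (B - A))^2)"
        by (simp only: complex_norm_square[symmetric] of_real_mult)
      finally show ?thesis by simp
    qed
  next
    assume h: "Im (cnj (B - A) * (C - A)) = 0"
    show "collinear {0, B - A, C - A}"
    proof (cases "B - A = 0")
      case True then show ?thesis using collinear_lemma[of "B - A" "C - A"] by blast
    next
      case False
      define c where "c = Re (cnj (B - A) * (C - A)) / (cmod (B - A))^2"
      have r: "cnj (B - A) * (C - A) = of_real (Re (cnj (B - A) * (C - A)))"
        using h by (simp add: complex_eq_iff)
      have n: "of_real ((cmod (B - A))^2) = (B - A) * cnj (B - A)"
        by (rule complex_norm_square)
      have "C - A = c *\<^sub>R (B - A)"
      proof -
        have "of_real c * (B - A) = of_real (Re (cnj (B - A) * (C - A))) * (B - A) / of_real ((cmod (B - A))^2)"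
          by (simp add: c_def)
        also have "\<dots> = cnj (B - A) * (C - A) * (B - A) / ((B - A) * cnj (B - A))"
          by (simp only: r[symmetric] n)
        also have "\<dots> = C - A" using False by (intro cancel_uc) simp
        finally show ?thesis by (simp add: scaleR_conv_of_real)
      qed
      then show ?thesis using collinear_lemma[of "B - A" "C - A"] by blast
    qed
  qed
  with c show ?thesis by simp
qed

lemma orth_eq:
  assumes "\<not> collinear {A, B, C}"
    and "inner (H - A) (B - C) = 0" "inner (H - B) (C - A) = 0" "inner (H - C) (A - B) = 0"
  shows "orthocenter A B C = H"
  unfolding orthocenter_def
proof (rule the_equality)
  show "inner (H - A) (B - C) = 0 \<and> inner (H - B) (C - A) = 0 \<and> inner (H - C) (A - B) = 0"
    using assms by simp
next
  fix H' assume h: "inner (H' - A) (B - C) = 0 \<and> inner (H' - B) (C - A) = 0 \<and> inner (H' - C) (A - B) = 0"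
  have nc: "Im (cnj (B - C) * (C - A)) \<noteq> 0"
  proof -
    have "Im (cnj (B - A) * (C - A)) \<noteq> 0" using assms(1) noncol_iff by blast
    moreover have "Im (cnj (B - C) * (C - A)) = Im (cnj (B - A) * (C - A))"
      by (simp add: algebra_simps)
    ultimately show ?thesis by simp
  qed
  have "inner (H' - H) (B - C) = 0"
    using h assms(2) by (simp add: inner_diff_left)
  moreover have "inner (H' - H) (C - A) = 0"
    using h assms(3) by (simp add: inner_diff_left)
  ultimately have "H' - H = 0" using lin_zero nc by blast
  then show "H' = H" by simp
qed

lemma dist_eq_iff: "dist X A = dist X B \<longleftrightarrow> (X - A) * cnj (X - A) = (X - B) * cnj (X - B)"
proof -
  have "dist X A = dist X B \<longleftrightarrow> (cmod (X - A))^2 = (cmod (X - B))^2"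
    by (simp add: dist_norm power2_eq_iff_nonneg)
  also have "\<dots> \<longleftrightarrow> (of_real ((cmod (X - A))^2) :: complex) = of_real ((cmod (X - B))^2)"
    by (simp only: of_real_eq_iff)
  also have "\<dots> \<longleftrightarrow> (X - A) * cnj (X - A) = (X - B) * cnj (X - B)"
    by (simp only: complex_norm_square)
  finally show ?thesis .
qed

lemma cmod_eq_iff: "cmod p = cmod q \<longleftrightarrow> p * cnj p = q * cnj q"
  using dist_eq_iff[of 0 "-p" "-q"] by (simp add: dist_norm)

lemma circ_eq:
  assumes "\<not> collinear {A, B, C}"
    and "dist X A = dist X B" "dist X B = dist X C"
  shows "circumcenter A B C = X"
  unfolding circumcenter_def
proof (rule the_equality)
  show "dist X A = dist X B \<and> dist X B = dist X C" using assms by simp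
next
  fix Y assume h: "dist Y A = dist Y B \<and> dist Y B = dist Y C"
  have key: "inner (Y - X) (Q - P) = 0" if "dist Y P = dist Y Q" "dist X P = dist X Q" for P Q
  proof -
    have "(cmod (Y - P))^2 = (cmod (Y - Q))^2" "(cmod (X - P))^2 = (cmod (X - Q))^2"
      using that by (auto simp: dist_norm)
    then have "inner (Y - P) (Y - P) = inner (Y - Q) (Y - Q)" "inner (X - P) (X - P) = inner (X - Q) (X - Q)"
      by (simp_all add: power2_norm_eq_inner)
    then show ?thesis by (simp add: inner_diff_left inner_diff_right inner_commute algebra_simps)
  qed
  have nc: "Im (cnj (B - A) * (C - B)) \<noteq> 0"
  proof -
    have "Im (cnj (B - A) * (C - A)) \<noteq> 0" using assms(1) noncol_iff by blast
    moreover have "Im (cnj (B - A) * (C - B)) = Im (cnj (B - A) * (C - A))"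
      by (simp add: algebra_simps)
    ultimately show ?thesis by simp
  qed
  have "inner (Y - X) (B - A) = 0" using key h assms(2) by blast
  moreover have "inner (Y - X) (C - B) = 0" using key[of B C] h assms(3) by blast
  ultimately have "Y - X = 0" using lin_zero nc by blast
  then show "Y = X" by simp
qed

section \<open>Similarity coordinates\<close>

definition Pt :: "complex \<Rightarrow> real \<Rightarrow> complex \<Rightarrow> complex" where
  "Pt M R p = M + complex_of_real R * p"

lemma Pt_diff: "Pt M R p - Pt M R q = R *\<^sub>R (p - q)"
  by (simp add: Pt_def scaleR_conv_of_real algebra_simps)

lemma dist_Pt: "dist (Pt M R p) (Pt M R q) = \<bar>R\<bar> * dist p q"
  by (simp add: dist_norm Pt_diff)

lemma noncol_Pt:
  assumes "R \<noteq> 0" "cnj (b - a) * (c - a) - (b - a) * cnj (c - a) \<noteq> 0"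
  shows "\<not> collinear {Pt M R a, Pt M R b, Pt M R c}"
proof -
  have "Im (cnj (b - a) * (c - a)) \<noteq> 0"
  proof
    assume h: "Im (cnj (b - a) * (c - a)) = 0"
    have "cnj (cnj (b - a) * (c - a)) = cnj (b - a) * (c - a)" using h by (rule cnj_real_eq)
    hence "(b - a) * cnj (c - a) = cnj (b - a) * (c - a)" by simp
    thus False using assms(2) by simp
  qed
  moreover have "cnj (Pt M R b - Pt M R a) * (Pt M R c - Pt M R a) = of_real (R * R) * (cnj (b - a) * (c - a))"
    by (simp add: Pt_diff scaleR_conv_of_real)
  ultimately have "Im (cnj (Pt M R b - Pt M R a) * (Pt M R c - Pt M R a)) \<noteq> 0"
    using assms(1) by simp
  thus ?thesis by (simp add: noncol_iff)
qed

lemma orth_Pt: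
  assumes "\<not> collinear {Pt M R a, Pt M R b, Pt M R c}"
    "cnj (h - a) * (b - c) + (h - a) * cnj (b - c) = 0"
    "cnj (h - b) * (c - a) + (h - b) * cnj (c - a) = 0"
    "cnj (h - c) * (a - b) + (h - c) * cnj (a - b) = 0"
  shows "orthocenter (Pt M R a) (Pt M R b) (Pt M R c) = Pt M R h"
  apply (rule orth_eq[OF assms(1)])
  using inner_zeroI[OF assms(2)] inner_zeroI[OF assms(3)] inner_zeroI[OF assms(4)]
  by (simp_all add: Pt_diff)

lemma circ_Pt:
  assumes "\<not> collinear {Pt M R a, Pt M R b, Pt M R c}"
    "(h - a) * cnj (h - a) = (h - b) * cnj (h - b)"
    "(h - b) * cnj (h - b) = (h - c) * cnj (h - c)"
  shows "circumcenter (Pt M R a) (Pt M R b) (Pt M R c) = Pt M R h"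
proof -
  have "dist h a = dist h b" "dist h b = dist h c" using assms(2,3) dist_eq_iff by blast+
  then show ?thesis by (intro circ_eq[OF assms(1)]) (simp_all add: dist_Pt)
qed

lemma reflect_Pt:
  assumes "R \<noteq> 0"
  shows "reflect (Pt M R p) (Pt M R q) (Pt M R r) = Pt M R (reflect p q r)"
proof -
  have "(Pt M R r - Pt M R p) / (Pt M R q - Pt M R p) = (r - p) / (q - p)"
    using assms by (simp add: Pt_diff scaleR_conv_of_real)
  then show ?thesis
    unfolding reflect_def by (simp add: Pt_diff scaleR_conv_of_real Pt_def algebra_simps)
qed

lemma centroid_Pt: "centroid (Pt M R a) (Pt M R b) (Pt M R c) = Pt M R ((a + b + c) / 3)"
  unfolding centroid_def Pt_def by (simp add: field_simps)


section \<open>Identities in normalized coordinates\<close>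

definition hA :: "complex \<Rightarrow> complex \<Rightarrow> complex \<Rightarrow> complex" where
  "hA x y z = y^2 + z^2 - x*y + y*z - z*x"

definition oA :: "complex \<Rightarrow> complex \<Rightarrow> complex \<Rightarrow> complex" where
  "oA x y z = x^2 - x*y - x*z - 2*y*z"

context
  fixes x y z :: complex
  assumes cx: "cnj x = 1/x" and cy: "cnj y = 1/y" and cz: "cnj z = 1/z"
    and nx: "x \<noteq> 0" and ny: "y \<noteq> 0" and nz: "z \<noteq> 0"
begin

lemma id_H_1:
  "cnj (x^2+y^2+z^2 - x^2) * (y^2 - z^2) + (x^2+y^2+z^2 - x^2) * cnj (y^2 - z^2) = 0"
  using nx ny nz by (simp add: cx cy cz field_simps) (algebra)?

lemma id_H_2:
  "cnj (x^2+y^2+z^2 - y^2) * (z^2 - x^2) + (x^2+y^2+z^2 - y^2) * cnj (z^2 - x^2) = 0"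
  using nx ny nz by (simp add: cx cy cz field_simps) (algebra)?

lemma id_H_3:
  "cnj (x^2+y^2+z^2 - z^2) * (x^2 - y^2) + (x^2+y^2+z^2 - z^2) * cnj (x^2 - y^2) = 0"
  using nx ny nz by (simp add: cx cy cz field_simps) (algebra)?

lemmas id_H = id_H_1 id_H_2 id_H_3

lemma nc_ABC:
  "cnj (y^2 - x^2) * (z^2 - x^2) - (y^2 - x^2) * cnj (z^2 - x^2)
    = (x^2-y^2)*(z^2-x^2)*(z^2-y^2)/(x^2*y^2*z^2)"
  using nx ny nz by (simp add: cx cy cz field_simps) (algebra)?

lemma id_HA_1:
  "cnj (hA x y z - y^2) * (-(x*y+y*z+z*x) - z^2) + (hA x y z - y^2) * cnj (-(x*y+y*z+z*x) - z^2) = 0"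
  unfolding hA_def using nx ny nz by (simp add: cx cy cz field_simps) (algebra)?

lemma id_HA_2:
  "cnj (hA x y z - -(x*y+y*z+z*x)) * (z^2 - y^2) + (hA x y z - -(x*y+y*z+z*x)) * cnj (z^2 - y^2) = 0"
  unfolding hA_def using nx ny nz by (simp add: cx cy cz field_simps) (algebra)?

lemma id_HA_3:
  "cnj (hA x y z - z^2) * (y^2 - -(x*y+y*z+z*x)) + (hA x y z - z^2) * cnj (y^2 - -(x*y+y*z+z*x)) = 0"
  unfolding hA_def using nx ny nz by (simp add: cx cy cz field_simps) (algebra)?

lemmas id_HA = id_HA_1 id_HA_2 id_HA_3

lemma nc_BIC:
  "cnj (-(x*y+y*z+z*x) - y^2) * (z^2 - y^2) - (-(x*y+y*z+z*x) - y^2) * cnj (z^2 - y^2)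
    = -(x+y)*(y+z)^2*(z-y)*(z+x)/(x*y^2*z^2)"
  using nx ny nz by (simp add: cx cy cz field_simps) (algebra)?

lemma id_OA_1:
  "(oA x y z - x^2) * cnj (oA x y z - x^2) = (oA x y z - hA y z x) * cnj (oA x y z - hA y z x)"
  unfolding hA_def oA_def using nx ny nz by (simp add: cx cy cz field_simps) (algebra)?

lemma id_OA_2:
  "(oA x y z - hA y z x) * cnj (oA x y z - hA y z x) = (oA x y z - hA z x y) * cnj (oA x y z - hA z x y)"
  unfolding hA_def oA_def using nx ny nz by (simp add: cx cy cz field_simps) (algebra)?

lemmas id_OA = id_OA_1 id_OA_2

lemma nc_AHH:
  "cnj (hA y z x - x^2) * (hA z x y - x^2) - (hA y z x - x^2) * cnj (hA z x y - x^2)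
    = (y-z)^3*(x+y)*(x+z)/(x*y^2*z^2)"
  unfolding hA_def using nx ny nz by (simp add: cx cy cz field_simps) (algebra)?

lemma id_HO_1:
  "cnj (x^2+y^2+z^2 - oA x y z) * (oA y z x - oA z x y) + (x^2+y^2+z^2 - oA x y z) * cnj (oA y z x - oA z x y) = 0"
  unfolding oA_def using nx ny nz by (simp add: cx cy cz field_simps) (algebra)?

lemma id_HO_2:
  "cnj (x^2+y^2+z^2 - oA y z x) * (oA z x y - oA x y z) + (x^2+y^2+z^2 - oA y z x) * cnj (oA z x y - oA x y z) = 0"
  unfolding oA_def using nx ny nz by (simp add: cx cy cz field_simps) (algebra)?

lemma id_HO_3:
  "cnj (x^2+y^2+z^2 - oA z x y) * (oA x y z - oA y z x) + (x^2+y^2+z^2 - oA z x y) * cnj (oA x y z - oA y z x) = 0"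
  unfolding oA_def using nx ny nz by (simp add: cx cy cz field_simps) (algebra)?

lemmas id_HO = id_HO_1 id_HO_2 id_HO_3

lemma nc_OOO:
  "cnj (oA y z x - oA x y z) * (oA z x y - oA x y z) - (oA y z x - oA x y z) * cnj (oA z x y - oA x y z)
    = (x-y)*(z-x)*(z-y)*(x+y+z)*(x*y+y*z+z*x)/(x^2*y^2*z^2)"
  unfolding oA_def using nx ny nz by (simp add: cx cy cz field_simps) (algebra)?

lemma id_CO_1:
  "(-2*(x*y+y*z+z*x) - oA x y z) * cnj (-2*(x*y+y*z+z*x) - oA x y z) = (-2*(x*y+y*z+z*x) - oA y z x) * cnj (-2*(x*y+y*z+z*x) - oA y z x)"
  unfolding oA_def using nx ny nz by (simp add: cx cy cz field_simps) (algebra)?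

lemma id_CO_2:
  "(-2*(x*y+y*z+z*x) - oA y z x) * cnj (-2*(x*y+y*z+z*x) - oA y z x) = (-2*(x*y+y*z+z*x) - oA z x y) * cnj (-2*(x*y+y*z+z*x) - oA z x y)"
  unfolding oA_def using nx ny nz by (simp add: cx cy cz field_simps) (algebra)?

lemmas id_CO = id_CO_1 id_CO_2

end


section \<open>Choice of square roots: the incenter\<close>

definition sgw :: "complex \<Rightarrow> complex \<Rightarrow> complex" where
  "sgw y z = \<i> * (z / y - y / z)"

lemma sgw_neg1: "sgw (-y) z = - sgw y z"
  by (simp add: sgw_def algebra_simps)

lemma sgw_neg2: "sgw y (-z) = - sgw y z"
  by (simp add: sgw_def algebra_simps)

lemma sgw_real:
  assumes "cmod y = 1" "cmod z = 1"
  shows "sgw y z = of_real (Re (sgw y z))"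
proof -
  have n: "y \<noteq> 0" "z \<noteq> 0" using assms by auto
  have cy: "cnj y = 1/y" and cz: "cnj z = 1/z" using assms cnj_unit by auto
  have "cnj (sgw y z) = - \<i> * ((1/z)/(1/y) - (1/y)/(1/z))"
    unfolding sgw_def by (simp add: cy cz)
  also have "\<dots> = sgw y z" unfolding sgw_def using n by (simp add: field_simps)
  finally have "cnj (sgw y z) = sgw y z" .
  then show ?thesis by (rule cnj_fix_ofreal)
qed

lemma sgw_abs:
  assumes "cmod y = 1" "cmod z = 1"
  shows "\<bar>Re (sgw y z)\<bar> = cmod (y^2 - z^2)"
proof -
  have "cmod (sgw y z) = cmod (z / y - y / z)"
    by (simp add: sgw_def norm_mult)
  also have "z / y - y / z = (z^2 - y^2) / (y * z)"
    using assms by (auto simp: divide_simps power2_eq_square)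
  also have "cmod ((z^2 - y^2) / (y * z)) = cmod (y^2 - z^2)"
    using assms by (simp add: norm_divide norm_mult norm_minus_commute)
  finally have "cmod (sgw y z) = cmod (y^2 - z^2)" .
  moreover have "cmod (sgw y z) = \<bar>Re (sgw y z)\<bar>"
    using sgw_real[OF assms] by (metis norm_of_real)
  ultimately show ?thesis by simp
qed

lemma key_sgw:
  assumes "x \<noteq> 0" "y \<noteq> 0" "z \<noteq> 0"
  shows "sgw y z * x^2 + sgw z x * y^2 + sgw x y * z^2 = -(sgw y z + sgw z x + sgw x y) * (x*y+y*z+z*x)"
  using assms unfolding sgw_def by (simp add: field_simps) (algebra)?

lemma sign_choice:
  assumes ux: "cmod x = 1" and uy: "cmod y = 1" and uz: "cmod z = 1"
  shows "\<exists>x' y' z' \<epsilon>. x'^2 = x^2 \<and> y'^2 = y^2 \<and> z'^2 = z^2 \<and> cmod x' = 1 \<and> cmod y' = 1 \<and> cmod z' = 1 \<and>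
     (\<epsilon> = 1 \<or> \<epsilon> = -1) \<and> Re (sgw y' z') = \<epsilon> * cmod (y^2 - z^2) \<and>
     Re (sgw z' x') = \<epsilon> * cmod (z^2 - x^2) \<and> Re (sgw x' y') = \<epsilon> * cmod (x^2 - y^2)"
proof -
  have a: "Re (sgw y z) = cmod (y^2 - z^2) \<or> Re (sgw y z) = - cmod (y^2 - z^2)"
    using sgw_abs[OF uy uz] by linarith
  have b: "Re (sgw z x) = cmod (z^2 - x^2) \<or> Re (sgw z x) = - cmod (z^2 - x^2)"
    using sgw_abs[OF uz ux] by linarith
  have c: "Re (sgw x y) = cmod (x^2 - y^2) \<or> Re (sgw x y) = - cmod (x^2 - y^2)"
    using sgw_abs[OF ux uy] by linarith
  from a b c show ?thesis
  proof (elim disjE)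
    assume "Re (sgw y z) = cmod (y^2 - z^2)" "Re (sgw z x) = cmod (z^2 - x^2)" "Re (sgw x y) = cmod (x^2 - y^2)"
    then show ?thesis using ux uy uz by (intro exI[of _ x] exI[of _ y] exI[of _ z] exI[of _ 1]) simp
  next
    assume "Re (sgw y z) = cmod (y^2 - z^2)" "Re (sgw z x) = cmod (z^2 - x^2)" "Re (sgw x y) = - cmod (x^2 - y^2)"
    then show ?thesis using ux uy uz
      by (intro exI[of _ x] exI[of _ y] exI[of _ "-z"] exI[of _ "-1"]) (simp add: sgw_neg1 sgw_neg2)
  next
    assume "Re (sgw y z) = cmod (y^2 - z^2)" "Re (sgw z x) = - cmod (z^2 - x^2)" "Re (sgw x y) = cmod (x^2 - y^2)"
    then show ?thesis using ux uy uz
      by (intro exI[of _ x] exI[of _ "-y"] exI[of _ z] exI[of _ "-1"]) (simp add: sgw_neg1 sgw_neg2)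
  next
    assume "Re (sgw y z) = cmod (y^2 - z^2)" "Re (sgw z x) = - cmod (z^2 - x^2)" "Re (sgw x y) = - cmod (x^2 - y^2)"
    then show ?thesis using ux uy uz
      by (intro exI[of _ "-x"] exI[of _ y] exI[of _ z] exI[of _ 1]) (simp add: sgw_neg1 sgw_neg2)
  next
    assume "Re (sgw y z) = - cmod (y^2 - z^2)" "Re (sgw z x) = cmod (z^2 - x^2)" "Re (sgw x y) = cmod (x^2 - y^2)"
    then show ?thesis using ux uy uz
      by (intro exI[of _ "-x"] exI[of _ y] exI[of _ z] exI[of _ "-1"]) (simp add: sgw_neg1 sgw_neg2)
  next
    assume "Re (sgw y z) = - cmod (y^2 - z^2)" "Re (sgw z x) = cmod (z^2 - x^2)" "Re (sgw x y) = - cmod (x^2 - y^2)"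
    then show ?thesis using ux uy uz
      by (intro exI[of _ x] exI[of _ "-y"] exI[of _ z] exI[of _ 1]) (simp add: sgw_neg1 sgw_neg2)
  next
    assume "Re (sgw y z) = - cmod (y^2 - z^2)" "Re (sgw z x) = - cmod (z^2 - x^2)" "Re (sgw x y) = cmod (x^2 - y^2)"
    then show ?thesis using ux uy uz
      by (intro exI[of _ x] exI[of _ y] exI[of _ "-z"] exI[of _ 1]) (simp add: sgw_neg1 sgw_neg2)
  next
    assume "Re (sgw y z) = - cmod (y^2 - z^2)" "Re (sgw z x) = - cmod (z^2 - x^2)" "Re (sgw x y) = - cmod (x^2 - y^2)"
    then show ?thesis using ux uy uz by (intro exI[of _ x] exI[of _ y] exI[of _ z] exI[of _ "-1"]) simp
  qed
qed

lemma scale_cancel: "r \<noteq> 0 \<Longrightarrow> (of_real r * p) /\<^sub>R r = (p::complex)"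
  by (simp add: scaleR_conv_of_real field_simps)

lemma incenter_Pt:
  assumes R: "R > 0" and ux: "cmod x = 1" and uy: "cmod y = 1" and uz: "cmod z = 1"
    and yz: "y^2 \<noteq> z^2" and eps: "\<epsilon> = 1 \<or> \<epsilon> = -1"
    and sa: "Re (sgw y z) = \<epsilon> * cmod (y^2 - z^2)"
    and sb: "Re (sgw z x) = \<epsilon> * cmod (z^2 - x^2)"
    and sc: "Re (sgw x y) = \<epsilon> * cmod (x^2 - y^2)"
  shows "incenter (Pt M R (x^2)) (Pt M R (y^2)) (Pt M R (z^2)) = Pt M R (-(x*y+y*z+z*x))"
proof -
  define ka where "ka = cmod (y^2 - z^2)"
  define kb where "kb = cmod (z^2 - x^2)"
  define kc where "kc = cmod (x^2 - y^2)"
  have kapos: "ka > 0" using yz by (simp add: ka_def)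
  have kb0: "kb \<ge> 0" "kc \<ge> 0" by (simp_all add: kb_def kc_def)
  have K: "ka + kb + kc > 0" using kapos kb0 by linarith
  have nz: "x \<noteq> 0" "y \<noteq> 0" "z \<noteq> 0" using ux uy uz by auto
  have e1: "sgw y z = of_real (\<epsilon> * ka)" using sgw_real[OF uy uz] sa by (simp add: ka_def)
  have e2: "sgw z x = of_real (\<epsilon> * kb)" using sgw_real[OF uz ux] sb by (simp add: kb_def)
  have e3: "sgw x y = of_real (\<epsilon> * kc)" using sgw_real[OF ux uy] sc by (simp add: kc_def)
  have "of_real \<epsilon> * (of_real ka * x^2 + of_real kb * y^2 + of_real kc * z^2)
      = of_real \<epsilon> * (- of_real (ka + kb + kc) * (x*y+y*z+z*x))"
    using key_sgw[OF nz] unfolding e1 e2 e3 by (simp add: algebra_simps)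
  moreover have "(of_real \<epsilon> :: complex) \<noteq> 0" using eps by auto
  ultimately have key: "of_real ka * x^2 + of_real kb * y^2 + of_real kc * z^2
      = - of_real (ka + kb + kc) * (x*y+y*z+z*x)" by simp
  have da: "dist (Pt M R (y^2)) (Pt M R (z^2)) = R * ka"
    unfolding dist_Pt using R by (simp add: ka_def dist_norm)
  have db: "dist (Pt M R (z^2)) (Pt M R (x^2)) = R * kb"
    unfolding dist_Pt using R by (simp add: kb_def dist_norm)
  have dc: "dist (Pt M R (x^2)) (Pt M R (y^2)) = R * kc"
    unfolding dist_Pt using R by (simp add: kc_def dist_norm)
  have num: "(R * ka) *\<^sub>R Pt M R (x^2) + (R * kb) *\<^sub>R Pt M R (y^2) + (R * kc) *\<^sub>R Pt M R (z^2)
      = of_real (R * (ka + kb + kc)) * Pt M R (-(x*y+y*z+z*x))"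
  proof -
    have "(R * ka) *\<^sub>R Pt M R (x^2) + (R * kb) *\<^sub>R Pt M R (y^2) + (R * kc) *\<^sub>R Pt M R (z^2)
        = of_real (R * (ka + kb + kc)) * M + of_real (R * R) * (of_real ka * x^2 + of_real kb * y^2 + of_real kc * z^2)"
      by (simp add: Pt_def scaleR_conv_of_real algebra_simps)
    also have "\<dots> = of_real (R * (ka + kb + kc)) * Pt M R (-(x*y+y*z+z*x))"
      unfolding key by (simp add: Pt_def algebra_simps)
    finally show ?thesis .
  qed
  have RK: "R * ka + R * kb + R * kc = R * (ka + kb + kc)" by (simp add: algebra_simps)
  have RK0: "R * (ka + kb + kc) \<noteq> 0" using R K by simp
  have "incenter (Pt M R (x^2)) (Pt M R (y^2)) (Pt M R (z^2))
      = (of_real (R * (ka + kb + kc)) * Pt M R (-(x*y+y*z+z*x))) /\<^sub>R (R * (ka + kb + kc))"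
    unfolding incenter_def da db dc num RK ..
  also have "\<dots> = Pt M R (-(x*y+y*z+z*x))"
    using RK0 by (rule scale_cancel)
  finally show ?thesis .
qed

lemma circumcenter_exists:
  fixes A B C :: complex
  assumes "\<not> collinear {A, B, C}"
  shows "\<exists>M. dist M A = dist M B \<and> dist M B = dist M C"
proof -
  define u where "u = B - A"
  define v where "v = C - A"
  have d: "cnj u * v - u * cnj v \<noteq> 0"
  proof
    assume h: "cnj u * v - u * cnj v = 0"
    have "Im (cnj u * v) \<noteq> 0" using assms noncol_iff u_def v_def by blast
    moreover have "cnj (cnj u * v) = u * cnj v" by simp
    moreover have "cnj (cnj u * v) = cnj u * v" using h by simp
    ultimately show False using cnj_fix_Im by blast
  qed
  define X where "X = u * v * (cnj u - cnj v) / (cnj u * v - u * cnj v)"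
  have cX: "cnj X = cnj u * cnj v * (u - v) / (u * cnj v - cnj u * v)"
    by (simp add: X_def)
  have d2: "u * cnj v - cnj u * v \<noteq> 0" using d by (metis minus_diff_eq neg_equal_0_iff_equal)
  have h1: "X * cnj X = (X - u) * cnj (X - u)"
    using d d2 unfolding cX by (simp add: X_def field_simps) (algebra)?
  have h2: "X * cnj X = (X - v) * cnj (X - v)"
    using d d2 unfolding cX by (simp add: X_def field_simps) (algebra)?
  have e: "A + X - A = X" "A + X - B = X - u" "A + X - C = X - v" by (simp_all add: u_def v_def)
  show ?thesis
  proof (intro exI conjI)
    show "dist (A + X) A = dist (A + X) B" unfolding dist_eq_iff e using h1 .
    show "dist (A + X) B = dist (A + X) C" unfolding dist_eq_iff e using h1 h2 by simp
  qed
qed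

lemma unit_root:
  assumes R: "R > 0" and d: "dist M P = R"
  shows "\<exists>x. cmod x = 1 \<and> P = Pt M R (x^2)"
proof -
  define x where "x = csqrt ((P - M) / of_real R)"
  have sq: "x^2 = (P - M) / of_real R" by (simp add: x_def)
  have "cmod (x^2) = 1"
    using R d unfolding sq by (simp add: norm_divide dist_norm norm_minus_commute)
  then have "(cmod x)^2 = 1" by (simp add: norm_power)
  then have "cmod x = 1" using power2_eq_1_iff[of "cmod x"] norm_ge_zero[of x] by auto
  moreover have "P = Pt M R (x^2)"
    using R unfolding sq Pt_def by (simp add: field_simps)
  ultimately show ?thesis by blast
qed

lemma sq_ne_imp:
  assumes "x^2 \<noteq> (y::complex)^2"
  shows "x \<noteq> y" "x + y \<noteq> 0" "y + x \<noteq> 0" "x - y \<noteq> 0" "y - x \<noteq> 0"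
    "-x \<noteq> y" "x \<noteq> -y" "-y \<noteq> x" "y \<noteq> -x"
proof -
  show "x \<noteq> y" using assms by auto
  show xy: "x + y \<noteq> 0"
  proof
    assume "x + y = 0" then have "y = -x" by (simp add: add_eq_0_iff)
    then show False using assms by simp
  qed
  then show "y + x \<noteq> 0" by (simp add: add.commute)
  show "x - y \<noteq> 0" "y - x \<noteq> 0" using assms by auto
  show "-x \<noteq> y" "x \<noteq> -y" "-y \<noteq> x" "y \<noteq> -x" using assms by auto
qed

lemma HA_Pt:
  assumes R: "R \<noteq> 0" and ux: "cmod x = 1" and uy: "cmod y = 1" and uz: "cmod z = 1"
    and d1: "x^2 \<noteq> y^2" and d2: "y^2 \<noteq> z^2" and d3: "z^2 \<noteq> x^2"
  shows "orthocenter (Pt M R (y^2)) (Pt M R (-(x*y+y*z+z*x))) (Pt M R (z^2)) = Pt M R (hA x y z)"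
proof -
  note c = cnj_unit[OF ux] cnj_unit[OF uy] cnj_unit[OF uz]
  have n: "x \<noteq> 0" "y \<noteq> 0" "z \<noteq> 0" using ux uy uz by auto
  have "-(x+y)*(y+z)^2*(z-y)*(z+x)/(x*y^2*z^2) \<noteq> 0"
    using n sq_ne_imp[OF d1] sq_ne_imp[OF d2] sq_ne_imp[OF d3] by simp
  then have "\<not> collinear {Pt M R (y^2), Pt M R (-(x*y+y*z+z*x)), Pt M R (z^2)}"
    using R nc_BIC[OF c n] by (intro noncol_Pt) auto
  then show ?thesis
    by (rule orth_Pt) (fact id_HA[OF c n])+
qed

lemma OA_Pt:
  assumes R: "R \<noteq> 0" and ux: "cmod x = 1" and uy: "cmod y = 1" and uz: "cmod z = 1"
    and d1: "x^2 \<noteq> y^2" and d2: "y^2 \<noteq> z^2" and d3: "z^2 \<noteq> x^2"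
  shows "circumcenter (Pt M R (x^2)) (Pt M R (hA y z x)) (Pt M R (hA z x y)) = Pt M R (oA x y z)"
proof -
  note c = cnj_unit[OF ux] cnj_unit[OF uy] cnj_unit[OF uz]
  have n: "x \<noteq> 0" "y \<noteq> 0" "z \<noteq> 0" using ux uy uz by auto
  have "(y-z)^3*(x+y)*(x+z)/(x*y^2*z^2) \<noteq> 0"
    using n sq_ne_imp[OF d1] sq_ne_imp[OF d2] sq_ne_imp[OF d3] by simp
  then have "\<not> collinear {Pt M R (x^2), Pt M R (hA y z x), Pt M R (hA z x y)}"
    using R nc_AHH[OF c n] by (intro noncol_Pt) auto
  then show ?thesis
    by (rule circ_Pt) (fact id_OA[OF c n])+
qed

lemma H_Pt:
  assumes R: "R \<noteq> 0" and ux: "cmod x = 1" and uy: "cmod y = 1" and uz: "cmod z = 1"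
    and d1: "x^2 \<noteq> y^2" and d2: "y^2 \<noteq> z^2" and d3: "z^2 \<noteq> x^2"
  shows "orthocenter (Pt M R (x^2)) (Pt M R (y^2)) (Pt M R (z^2)) = Pt M R (x^2+y^2+z^2)"
proof -
  note c = cnj_unit[OF ux] cnj_unit[OF uy] cnj_unit[OF uz]
  have n: "x \<noteq> 0" "y \<noteq> 0" "z \<noteq> 0" using ux uy uz by auto
  have "(x^2-y^2)*(z^2-x^2)*(z^2-y^2)/(x^2*y^2*z^2) \<noteq> 0"
    using n d1 not_sym[OF d2] d3 by simp
  then have "\<not> collinear {Pt M R (x^2), Pt M R (y^2), Pt M R (z^2)}"
    using R nc_ABC[OF c n] by (intro noncol_Pt) auto
  then show ?thesis
    by (rule orth_Pt) (fact id_H[OF c n])+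
qed

lemma cnj_sym:
  assumes cx: "cnj x = 1/x" and cy: "cnj y = 1/y" and cz: "cnj z = 1/z"
    and nx: "x \<noteq> 0" and ny: "y \<noteq> 0" and nz: "z \<noteq> 0"
  shows "cnj (x+y+z) = (x*y+y*z+z*x)/(x*y*z)"
    and "cnj (x*y+y*z+z*x) = (x+y+z)/(x*y*z)"
    and "cnj (y^2+y*z+z^2) = (y^2+y*z+z^2)/(y^2*z^2)"
  using nx ny nz by (simp_all add: cx cy cz field_simps) (algebra)?

lemma e2_ne:
  assumes ux: "cmod x = 1" and uy: "cmod y = 1" and uz: "cmod z = 1" and s1: "x+y+z \<noteq> 0"
  shows "x*y+y*z+z*x \<noteq> 0"
proof
  assume h: "x*y+y*z+z*x = 0"
  have n: "x \<noteq> 0" "y \<noteq> 0" "z \<noteq> 0" using ux uy uz by auto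
  have "cnj (x+y+z) = 0"
    using cnj_sym(1)[OF cnj_unit[OF ux] cnj_unit[OF uy] cnj_unit[OF uz] n] h by simp
  then have "x+y+z = 0" by (simp only: complex_cnj_zero_iff)
  then show False using s1 by simp
qed

lemma aux_tc:
  fixes x y z a b q :: complex
  assumes "x \<noteq> 0" "y \<noteq> 0" "z \<noteq> 0" "a \<noteq> 0" "b \<noteq> 0"
  shows "3 * (1/x) * (q/(y^2*z^2)) / ((b/(x*y*z)) * (a/(x*y*z))) = 3*x*q/(a*b)"
  using assms by (simp add: field_simps power2_eq_square)

lemma tc_real:
  assumes ux: "cmod x = 1" and uy: "cmod y = 1" and uz: "cmod z = 1"
    and s1: "x+y+z \<noteq> 0" and s2: "x*y+y*z+z*x \<noteq> 0"
  shows "cnj (3*x*(y^2+y*z+z^2)/((x+y+z)*(x*y+y*z+z*x))) = 3*x*(y^2+y*z+z^2)/((x+y+z)*(x*y+y*z+z*x))"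
proof -
  note c = cnj_unit[OF ux] cnj_unit[OF uy] cnj_unit[OF uz]
  have n: "x \<noteq> 0" "y \<noteq> 0" "z \<noteq> 0" using ux uy uz by auto
  note cs = cnj_sym[OF c n]
  have "cnj (3*x*(y^2+y*z+z^2)/((x+y+z)*(x*y+y*z+z*x)))
      = 3 * (1/x) * ((y^2+y*z+z^2)/(y^2*z^2)) / (((x*y+y*z+z*x)/(x*y*z)) * ((x+y+z)/(x*y*z)))"
    by (simp only: complex_cnj_divide complex_cnj_mult complex_cnj_numeral cs c)
  also have "\<dots> = 3*x*(y^2+y*z+z^2)/((x+y+z)*(x*y+y*z+z*x))"
    by (rule aux_tc[OF n s1 s2])
  finally show ?thesis .
qed

lemma aux_X:
  fixes ss pp qq x :: complex
  assumes "ss \<noteq> 0" "pp \<noteq> 0"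
  shows "-2*pp + (3*x*qq/(ss*pp)) * (ss^2/3) = -2*pp + x*qq * ss/pp"
  using assms by (simp add: field_simps power2_eq_square)

lemma aux_frac:
  fixes A B C p :: complex
  assumes "p \<noteq> 0" "A*p + B = C"
  shows "A + B/p = C/p"
  using assms by (simp add: field_simps)

lemma aux_W:
  fixes a s p y z :: complex
  assumes "s \<noteq> 0" "p \<noteq> 0" "z - y \<noteq> 0"
  shows "(-a*z * s/p)/((z-y) * s) = a*z/((y-z)*p)"
proof -
  have "y - z \<noteq> 0" using assms(3) by auto
  then show ?thesis using assms by (simp add: field_simps)
qed

lemma aux_cW:
  fixes x y z s :: complex
  assumes "x \<noteq> 0" "y \<noteq> 0" "z \<noteq> 0" "s \<noteq> 0" "z - y \<noteq> 0"
  shows "((1/y)^2 - (1/z)*(1/x)) * (1/z) / ((1/y - 1/z) * (s/(x*y*z))) = (z*x - y^2)/((z-y) * s)"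
proof -
  have "1/y - 1/z = (z - y)/(y*z)" using assms by (simp add: field_simps)
  then show ?thesis using assms by (simp add: field_simps power2_eq_square)
qed

lemma aux_fin:
  fixes a b s :: complex
  assumes "s \<noteq> 0" "b \<noteq> 0"
  shows "b * s * (a/(b * s)) = a"
  using assms by simp

lemma refl_id:
  assumes ux: "cmod x = 1" and uy: "cmod y = 1" and uz: "cmod z = 1"
    and yz: "y \<noteq> z" and s1: "x+y+z \<noteq> 0" and s2: "x*y+y*z+z*x \<noteq> 0"
  shows "reflect (oA y z x) (oA z x y)
     (-2*(x*y+y*z+z*x) + (3*x*(y^2+y*z+z^2)/((x+y+z)*(x*y+y*z+z*x))) *
        ((oA x y z + oA y z x + oA z x y)/3 - -2*(x*y+y*z+z*x))) = -(x*y+y*z+z*x)"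
proof -
  note c = cnj_unit[OF ux] cnj_unit[OF uy] cnj_unit[OF uz]
  have n: "x \<noteq> 0" "y \<noteq> 0" "z \<noteq> 0" using ux uy uz by auto
  note cs = cnj_sym[OF c n]
  have zy: "z - y \<noteq> 0" "y - z \<noteq> 0" using yz by auto
  have G: "(oA x y z + oA y z x + oA z x y)/3 - -2*(x*y+y*z+z*x) = (x+y+z)^2/3"
    unfolding oA_def by (simp add: field_simps) (algebra)?
  define X where "X = -2*(x*y+y*z+z*x) + (3*x*(y^2+y*z+z^2)/((x+y+z)*(x*y+y*z+z*x))) *
        ((oA x y z + oA y z x + oA z x y)/3 - -2*(x*y+y*z+z*x))"
  have X1: "X = -2*(x*y+y*z+z*x) + x*(y^2+y*z+z^2)*(x+y+z)/(x*y+y*z+z*x)"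
    unfolding X_def G by (rule aux_X[OF s1 s2])
  have Xb: "X - oA y z x = -(y^2 - z*x)*z*(x+y+z)/(x*y+y*z+z*x)"
  proof -
    have "X - oA y z x = (-2*(x*y+y*z+z*x) - oA y z x) + x*(y^2+y*z+z^2)*(x+y+z)/(x*y+y*z+z*x)"
      unfolding X1 by simp
    also have "\<dots> = -(y^2 - z*x)*z*(x+y+z)/(x*y+y*z+z*x)"
      by (rule aux_frac[OF s2]) (unfold oA_def, algebra)
    finally show ?thesis .
  qed
  have Cb: "oA z x y - oA y z x = (z-y)*(x+y+z)"
    unfolding oA_def by algebra
  have W: "(X - oA y z x) / (oA z x y - oA y z x) = (y^2 - z*x)*z/((y-z)*(x*y+y*z+z*x))"
    unfolding Xb Cb by (rule aux_W[OF s1 s2 zy(1)])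
  have cW: "cnj ((y^2 - z*x)*z/((y-z)*(x*y+y*z+z*x))) = (z*x - y^2)/((z-y)*(x+y+z))"
  proof -
    have "cnj ((y^2 - z*x)*z/((y-z)*(x*y+y*z+z*x)))
        = ((1/y)^2 - (1/z)*(1/x)) * (1/z) / ((1/y - 1/z) * ((x+y+z)/(x*y*z)))"
      by (simp only: complex_cnj_divide complex_cnj_mult complex_cnj_diff complex_cnj_power cs c)
    also have "\<dots> = (z*x - y^2)/((z-y)*(x+y+z))"
      by (rule aux_cW[OF n s1 zy(1)])
    finally show ?thesis .
  qed
  have "reflect (oA y z x) (oA z x y) X = oA y z x + (z-y)*(x+y+z)*((z*x - y^2)/((z-y)*(x+y+z)))"
    unfolding reflect_def unfolding W unfolding cW Cb ..
  also have "\<dots> = oA y z x + (z*x - y^2)"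
    by (simp only: aux_fin[OF s1 zy(1)])
  also have "\<dots> = -(x*y+y*z+z*x)"
    unfolding oA_def by algebra
  finally show ?thesis unfolding X_def .
qed

lemma refl_mem:
  assumes R: "R \<noteq> 0" and ux: "cmod x = 1" and uy: "cmod y = 1" and uz: "cmod z = 1"
    and yz: "y \<noteq> z" and s1: "x+y+z \<noteq> 0"
  shows "Pt M R (-(x*y+y*z+z*x)) \<in> reflect (Pt M R (oA y z x)) (Pt M R (oA z x y)) `
     line (Pt M R (-2*(x*y+y*z+z*x))) (Pt M R ((oA x y z + oA y z x + oA z x y)/3))"
proof -
  have s2: "x*y+y*z+z*x \<noteq> 0" using e2_ne[OF ux uy uz s1] .
  define tc where "tc = 3*x*(y^2+y*z+z^2)/((x+y+z)*(x*y+y*z+z*x))"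
  have "cnj tc = tc" unfolding tc_def using tc_real[OF ux uy uz s1 s2] .
  then have tcr: "tc = of_real (Re tc)" by (rule cnj_fix_ofreal)
  define X where "X = Pt M R (-2*(x*y+y*z+z*x)) + Re tc *\<^sub>R
      (Pt M R ((oA x y z + oA y z x + oA z x y)/3) - Pt M R (-2*(x*y+y*z+z*x)))"
  have Xl: "X \<in> line (Pt M R (-2*(x*y+y*z+z*x))) (Pt M R ((oA x y z + oA y z x + oA z x y)/3))"
    unfolding X_def line_def by blast
  have XP: "X = Pt M R (-2*(x*y+y*z+z*x) + tc * ((oA x y z + oA y z x + oA z x y)/3 - -2*(x*y+y*z+z*x)))"
    unfolding X_def Pt_diff by (subst tcr) (simp add: Pt_def scaleR_conv_of_real algebra_simps)
  have "reflect (Pt M R (oA y z x)) (Pt M R (oA z x y)) X = Pt M R (-(x*y+y*z+z*x))"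
    unfolding XP reflect_Pt[OF R] tc_def using refl_id[OF ux uy uz yz s1 s2] by simp
  then show ?thesis using Xl by (metis image_eqI)
qed

lemma oA_diff: "oA x y z - oA y z x = (x - y) * (x + y + z)"
  unfolding oA_def by algebra

lemma unit_dist_eq:
  assumes ux: "cmod x = 1" and uy: "cmod y = 1" and uz: "cmod z = 1"
    and h: "cmod (x - y) = cmod (y - z)" and xz: "x \<noteq> z"
  shows "x * z = y^2"
proof -
  note c = cnj_unit[OF ux] cnj_unit[OF uy] cnj_unit[OF uz]
  have n: "x \<noteq> 0" "y \<noteq> 0" "z \<noteq> 0" using ux uy uz by auto
  have "(x - y) * cnj (x - y) = (y - z) * cnj (y - z)" using h cmod_eq_iff by blast
  then have "(x - y) * (1/x - 1/y) = (y - z) * (1/y - 1/z)" by (simp add: c)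
  then have "(x - z) * (x * z - y^2) = 0" using n by (simp add: field_simps) (algebra)?
  then show ?thesis using xz by simp
qed

lemma Otri:
  assumes R: "R \<noteq> 0" and ux: "cmod x = 1" and uy: "cmod y = 1" and uz: "cmod z = 1"
    and d1: "x^2 \<noteq> y^2" and d2: "y^2 \<noteq> z^2" and d3: "z^2 \<noteq> x^2" and s1: "x+y+z \<noteq> 0"
  shows "\<not> collinear {Pt M R (oA x y z), Pt M R (oA y z x), Pt M R (oA z x y)}"
    and "orthocenter (Pt M R (oA x y z)) (Pt M R (oA y z x)) (Pt M R (oA z x y)) = Pt M R (x^2+y^2+z^2)"
    and "circumcenter (Pt M R (oA x y z)) (Pt M R (oA y z x)) (Pt M R (oA z x y)) = Pt M R (-2*(x*y+y*z+z*x))"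
    and "\<not> equilateral (Pt M R (oA x y z)) (Pt M R (oA y z x)) (Pt M R (oA z x y))"
proof -
  note c = cnj_unit[OF ux] cnj_unit[OF uy] cnj_unit[OF uz]
  have n: "x \<noteq> 0" "y \<noteq> 0" "z \<noteq> 0" using ux uy uz by auto
  have s2: "x*y+y*z+z*x \<noteq> 0" using e2_ne[OF ux uy uz s1] .
  have ne: "x \<noteq> y" "y \<noteq> z" "z \<noteq> x" using d1 d2 d3 by auto
  have "(x-y)*(z-x)*(z-y)*(x+y+z)*(x*y+y*z+z*x)/(x^2*y^2*z^2) \<noteq> 0"
    using n ne(1,3) not_sym[OF ne(2)] s1 s2 by simp
  then show nc: "\<not> collinear {Pt M R (oA x y z), Pt M R (oA y z x), Pt M R (oA z x y)}"
    using R nc_OOO[OF c n] by (intro noncol_Pt) auto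
  show "orthocenter (Pt M R (oA x y z)) (Pt M R (oA y z x)) (Pt M R (oA z x y)) = Pt M R (x^2+y^2+z^2)"
    using nc by (rule orth_Pt) (fact id_HO[OF c n])+
  show "circumcenter (Pt M R (oA x y z)) (Pt M R (oA y z x)) (Pt M R (oA z x y)) = Pt M R (-2*(x*y+y*z+z*x))"
    using nc by (rule circ_Pt) (fact id_CO[OF c n])+
  show "\<not> equilateral (Pt M R (oA x y z)) (Pt M R (oA y z x)) (Pt M R (oA z x y))"
  proof
    assume "equilateral (Pt M R (oA x y z)) (Pt M R (oA y z x)) (Pt M R (oA z x y))"
    then have "\<bar>R\<bar> * dist (oA x y z) (oA y z x) = \<bar>R\<bar> * dist (oA y z x) (oA z x y)"
      "\<bar>R\<bar> * dist (oA y z x) (oA z x y) = \<bar>R\<bar> * dist (oA z x y) (oA x y z)"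
      unfolding equilateral_def dist_Pt by auto
    then have "cmod (oA x y z - oA y z x) = cmod (oA y z x - oA z x y)"
      "cmod (oA y z x - oA z x y) = cmod (oA z x y - oA x y z)"
      using R by (simp_all add: dist_norm)
    then have "cmod (x - y) * cmod (x+y+z) = cmod (y - z) * cmod (y+z+x)"
      "cmod (y - z) * cmod (y+z+x) = cmod (z - x) * cmod (z+x+y)"
      by (simp_all only: oA_diff norm_mult)
    moreover have "y+z+x = x+y+z" "z+x+y = x+y+z" by (simp_all add: ac_simps)
    ultimately have "cmod (x - y) = cmod (y - z)" "cmod (y - z) = cmod (z - x)"
      using s1 by auto
    then have "x * z = y^2" "y * x = z^2"
      using unit_dist_eq[OF ux uy uz] unit_dist_eq[OF uy uz ux] ne by auto
    then have "(z - y) * (x + y + z) = 0" by algebra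
    then show False using ne s1 by simp
  qed
qed

lemma equi_aux:
  assumes ux: "cmod x = 1" and uy: "cmod y = 1" and uz: "cmod z = 1" and s: "x+y+z = 0"
  shows "(x^2-y^2)*cnj(x^2-y^2) = (y^2-z^2)*cnj(y^2-z^2)"
proof -
  note c = cnj_unit[OF ux] cnj_unit[OF uy] cnj_unit[OF uz]
  have n: "x \<noteq> 0" "y \<noteq> 0" "z \<noteq> 0" using ux uy uz by auto
  have zd: "z = -x-y" using s by algebra
  have xy1: "x + y \<noteq> 0"
  proof
    assume "x + y = 0"
    then have "z = 0" using zd by algebra
    then show False using n(3) by simp
  qed
  have xy2: "-x-y \<noteq> 0"
  proof
    assume "-x-y = 0"
    then have "x + y = 0" by algebra
    then show False using xy1 by simp
  qed
  note xy = xy1 xy2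
  have "cnj z = -(1/x) - 1/y" unfolding zd by (simp add: c)
  then have "1/(-x-y) = -(1/x) - 1/y" using c(3) zd by simp
  then have r: "x^2 + x*y + y^2 = 0" using n xy by (simp add: field_simps) (algebra)?
  show "(x^2-y^2)*cnj(x^2-y^2) = (y^2-z^2)*cnj(y^2-z^2)"
    using r unfolding zd by (simp add: c n xy field_simps) (algebra)?
qed

lemma equi_ABC:
  assumes ux: "cmod x = 1" and uy: "cmod y = 1" and uz: "cmod z = 1" and s: "x+y+z = 0"
  shows "equilateral (Pt M R (x^2)) (Pt M R (y^2)) (Pt M R (z^2))"
proof -
  have q1: "(x^2-y^2)*cnj(x^2-y^2) = (y^2-z^2)*cnj(y^2-z^2)" by (rule equi_aux[OF ux uy uz s])
  have s': "y+z+x = 0" using s by (simp add: ac_simps)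
  have q2: "(y^2-z^2)*cnj(y^2-z^2) = (z^2-x^2)*cnj(z^2-x^2)" by (rule equi_aux[OF uy uz ux s'])
  have "cmod (x^2-y^2) = cmod (y^2-z^2)" "cmod (y^2-z^2) = cmod (z^2-x^2)"
    using q1 q2 cmod_eq_iff by blast+
  then show ?thesis
    unfolding equilateral_def dist_Pt by (simp add: dist_norm)
qed

lemma euler_line_Pt:
  assumes "R \<noteq> 0" "cmod x = 1" "cmod y = 1" "cmod z = 1"
    "x^2 \<noteq> y^2" "y^2 \<noteq> z^2" "z^2 \<noteq> x^2" "x+y+z \<noteq> 0"
  shows "euler_line (Pt M R (oA x y z)) (Pt M R (oA y z x)) (Pt M R (oA z x y))
    = line (Pt M R (-2*(x*y+y*z+z*x))) (Pt M R ((oA x y z + oA y z x + oA z x y)/3))"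
  unfolding euler_line_def Otri(3)[OF assms] centroid_Pt ..

lemma main_param:
  assumes R: "R > 0" and ux: "cmod x = 1" and uy: "cmod y = 1" and uz: "cmod z = 1"
    and d1: "x^2 \<noteq> y^2" and d2: "y^2 \<noteq> z^2" and d3: "z^2 \<noteq> x^2" and s1: "x+y+z \<noteq> 0"
  shows "triangle (Pt M R (oA x y z)) (Pt M R (oA y z x)) (Pt M R (oA z x y)) \<and>
         Pt M R (x^2+y^2+z^2) = orthocenter (Pt M R (oA x y z)) (Pt M R (oA y z x)) (Pt M R (oA z x y)) \<and>
         euler_reflection_point (Pt M R (-(x*y+y*z+z*x))) (Pt M R (oA x y z)) (Pt M R (oA y z x)) (Pt M R (oA z x y))"
proof -
  have R0: "R \<noteq> 0" using R by simp
  note O = Otri[OF R0 ux uy uz d1 d2 d3 s1]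
  have s1': "y+z+x \<noteq> 0" "z+x+y \<noteq> 0" using s1 by (simp_all add: ac_simps)
  have e2r: "y*z+z*x+x*y = x*y+y*z+z*x" "z*x+x*y+y*z = x*y+y*z+z*x" by (simp_all add: ac_simps)
  have gr: "oA y z x + oA z x y + oA x y z = oA x y z + oA y z x + oA z x y"
    "oA z x y + oA x y z + oA y z x = oA x y z + oA y z x + oA z x y" by (simp_all add: ac_simps)
  have ne: "x \<noteq> y" "y \<noteq> z" "z \<noteq> x" using d1 d2 d3 by auto
  have EL: "euler_line (Pt M R (oA x y z)) (Pt M R (oA y z x)) (Pt M R (oA z x y))
    = line (Pt M R (-2*(x*y+y*z+z*x))) (Pt M R ((oA x y z + oA y z x + oA z x y)/3))"
    by (rule euler_line_Pt[OF R0 ux uy uz d1 d2 d3 s1])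
  have m1: "Pt M R (-(x*y+y*z+z*x)) \<in> reflect (Pt M R (oA y z x)) (Pt M R (oA z x y)) `
     line (Pt M R (-2*(x*y+y*z+z*x))) (Pt M R ((oA x y z + oA y z x + oA z x y)/3))"
    by (rule refl_mem[OF R0 ux uy uz ne(2) s1])
  have m2: "Pt M R (-(x*y+y*z+z*x)) \<in> reflect (Pt M R (oA z x y)) (Pt M R (oA x y z)) `
     line (Pt M R (-2*(x*y+y*z+z*x))) (Pt M R ((oA x y z + oA y z x + oA z x y)/3))"
    using refl_mem[OF R0 uy uz ux ne(3) s1'(1), of M] unfolding e2r gr .
  have m3: "Pt M R (-(x*y+y*z+z*x)) \<in> reflect (Pt M R (oA x y z)) (Pt M R (oA y z x)) `
     line (Pt M R (-2*(x*y+y*z+z*x))) (Pt M R ((oA x y z + oA y z x + oA z x y)/3))"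
    using refl_mem[OF R0 uz ux uy ne(1) s1'(2), of M] unfolding e2r gr .
  show ?thesis
    unfolding euler_reflection_point_def triangle_def EL
    using O m1 m2 m3 by simp
qed

theorem corollary5p4:
  fixes A B C :: complex
  assumes "triangle A B C"
    and "\<not> equilateral A B C"
  defines "I \<equiv> incenter A B C"
    and "H \<equiv> orthocenter A B C"
  defines "H\<^sub>A \<equiv> orthocenter B I C"
    and "H\<^sub>B \<equiv> orthocenter C I A"
    and "H\<^sub>C \<equiv> orthocenter A I B"
  defines "O\<^sub>A \<equiv> circumcenter A H\<^sub>B H\<^sub>C"
    and "O\<^sub>B \<equiv> circumcenter B H\<^sub>C H\<^sub>A"
    and "O\<^sub>C \<equiv> circumcenter C H\<^sub>A H\<^sub>B"
  shows "triangle O\<^sub>A O\<^sub>B O\<^sub>C \<and> H = orthocenter O\<^sub>A O\<^sub>B O\<^sub>C \<and>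
         euler_reflection_point I O\<^sub>A O\<^sub>B O\<^sub>C"
proof -
  have nc: "\<not> collinear {A, B, C}" using assms(1) by (simp add: triangle_def)
  obtain M where M: "dist M A = dist M B" "dist M B = dist M C"
    using circumcenter_exists[OF nc] by blast
  define R where "R = dist M A"
  have AB: "A \<noteq> B" "B \<noteq> C" "C \<noteq> A" using nc by (auto simp: insert_commute collinear_2)
  have R: "R > 0"
  proof -
    have "R \<noteq> 0"
    proof
      assume "R = 0"
      then have "M = A" "M = B" using M by (auto simp: R_def)
      then show False using AB by simp
    qed
    then show ?thesis by (simp add: R_def)
  qed
  obtain x0 where x0: "cmod x0 = 1" "A = Pt M R (x0^2)" using unit_root[OF R] R_def by blast
  obtain y0 where y0: "cmod y0 = 1" "B = Pt M R (y0^2)" using unit_root[OF R, of M B] R_def M by auto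
  obtain z0 where z0: "cmod z0 = 1" "C = Pt M R (z0^2)" using unit_root[OF R, of M C] R_def M by auto
  obtain x y z \<epsilon> where xyz: "x^2 = x0^2" "y^2 = y0^2" "z^2 = z0^2" "cmod x = 1" "cmod y = 1" "cmod z = 1"
    "\<epsilon> = 1 \<or> \<epsilon> = -1" "Re (sgw y z) = \<epsilon> * cmod (y0^2 - z0^2)"
    "Re (sgw z x) = \<epsilon> * cmod (z0^2 - x0^2)" "Re (sgw x y) = \<epsilon> * cmod (x0^2 - y0^2)"
    using sign_choice[OF x0(1) y0(1) z0(1)] by blast
  have A: "A = Pt M R (x^2)" and B: "B = Pt M R (y^2)" and C: "C = Pt M R (z^2)"
    using x0 y0 z0 xyz by simp_all
  have R0: "R \<noteq> 0" using R by simp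
  have d1: "x^2 \<noteq> y^2" using AB A B by auto
  have d2: "y^2 \<noteq> z^2" using AB B C by auto
  have d3: "z^2 \<noteq> x^2" using AB C A by auto
  note u = xyz(4,5,6)
  have I: "I = Pt M R (-(x*y+y*z+z*x))"
    unfolding I_def A B C
    by (rule incenter_Pt[OF R u d2 xyz(7)]) (use xyz in simp_all)
  have H: "H = Pt M R (x^2+y^2+z^2)"
    unfolding H_def A B C by (rule H_Pt[OF R0 u d1 d2 d3])
  have s1: "x+y+z \<noteq> 0"
  proof
    assume "x+y+z = 0"
    then have "equilateral A B C" unfolding A B C by (rule equi_ABC[OF u])
    then show False using assms(2) by simp
  qed
  have e2r: "y*z+z*x+x*y = x*y+y*z+z*x" "z*x+x*y+y*z = x*y+y*z+z*x" by (simp_all add: ac_simps)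
  have HA: "H\<^sub>A = Pt M R (hA x y z)"
    unfolding H\<^sub>A_def I B C by (rule HA_Pt[OF R0 u d1 d2 d3])
  have HB: "H\<^sub>B = Pt M R (hA y z x)"
    using HA_Pt[OF R0 xyz(5,6,4) d2 d3 d1, of M] unfolding H\<^sub>B_def I C A e2r .
  have HC: "H\<^sub>C = Pt M R (hA z x y)"
    using HA_Pt[OF R0 xyz(6,4,5) d3 d1 d2, of M] unfolding H\<^sub>C_def I A B e2r .
  have OA: "O\<^sub>A = Pt M R (oA x y z)"
    unfolding O\<^sub>A_def A HB HC by (rule OA_Pt[OF R0 u d1 d2 d3])
  have OB: "O\<^sub>B = Pt M R (oA y z x)"
    unfolding O\<^sub>B_def B HC HA by (rule OA_Pt[OF R0 xyz(5,6,4) d2 d3 d1])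
  have OC: "O\<^sub>C = Pt M R (oA z x y)"
    unfolding O\<^sub>C_def C HA HB by (rule OA_Pt[OF R0 xyz(6,4,5) d3 d1 d2])
  show ?thesis
    unfolding OA OB OC H I by (rule main_param[OF R u d1 d2 d3 s1])
qed

end
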